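(* The set $N_0:=S^2\setminus(A\cup -A)$ contains no three mutually orthogonal unit vectors.
   Context: For $t\in[-\tfrac12,0)$ define points of $S^2\subset\mathbb{R}^3$: $\mathbf r_1(t)=\big(\tfrac{1}{\sqrt2},\,t,\,\sqrt{\tfrac12-t^2}\big)$, $\mathbf r_2(t)=\Big(-\tfrac{\frac12+t}{1+t},\,\tfrac1{\sqrt2},\,\tfrac1{\sqrt2}\tfrac{\sqrt{\frac12-t^2}}{1+t}\Big)$, $\mathbf r_3(t)=\mathbf r_1(t)\times\mathbf r_2(t)=\Big(-\tfrac1{\sqrt2}\tfrac{\sqrt{\frac12-t^2}}{1+t},\,-\sqrt{\tfrac12-t^2},\,\tfrac{\frac12+t+t^2}{1+t}\Big)$. Let $R_{\pi/2}$ be the rotation $(x,y,z)\mapsto(-y,x,z)$ (by $\pi/2$ about the $z$-axis). Define $\mathbf r_0:[0,\tfrac14)\to S^2$ by $\mathbf r_0(t)=\mathbf r_1(6t-\tfrac12)$ for $t\in[0,\tfrac1{12})$, $\mathbf r_0(t)=R_{\pi/2}^3\mathbf r_2(6t-1)$ for $t\in[\tfrac1{12},\tfrac16)$, $\mathbf r_0(t)=R_{\pi/2}^2\mathbf r_3(6t-\tfrac32)$ for $t\in[\tfrac16,\tfrac14)$. Define $\mathbf R:[0,1)\to S^2$ by $\mathbf R(t)=R_{\pi/2}^k\,\mathbf r_0(t-\tfrac k4)$ for $t\in[\tfrac k4,\tfrac{k+1}4)$, $k=0,1,2,3$, and extend $\mathbf R$ to $\mathbb R$ periodically with period $1$: $\mathbf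 R(t):=\mathbf R(t-\lfloor t\rfloor)$. The image $\Gamma=\mathbf R(\mathbb R)$ is a closed curve on $S^2$; let $A\subseteq S^2$ be the closed region bounded by $\Gamma$ containing the north pole, i.e. $A=\Gamma\cup C$, where $C$ is the connected component of $S^2\setminus\Gamma$ containing $(0,0,1)$. Also $-A:=\{-n:n\in A\}$. *)

theory Defs
  imports "HOL-Analysis.Analysis"
begin

definition r1 :: "real \<Rightarrow> real^3" where
  "r1 t = vector [1 / sqrt 2, t, sqrt (1/2 - t^2)]"

definition r2 :: "real \<Rightarrow> real^3" where
  "r2 t = vector [- ((1/2 + t) / (1 + t)), 1 / sqrt 2,
                  (1 / sqrt 2) * (sqrt (1/2 - t^2) / (1 + t))]"

definition r3 :: "real \<Rightarrow> real^3" where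
  "r3 t = cross3 (r1 t) (r2 t)"

definition rotz :: "real^3 \<Rightarrow> real^3" where
  "rotz v = vector [- (v$2), v$1, v$3]"

definition r0 :: "real \<Rightarrow> real^3" where
  "r0 t = (if t < 1/12 then r1 (6*t - 1/2)
           else if t < 1/6 then (rotz ^^ 3) (r2 (6*t - 1))
           else (rotz ^^ 2) (r3 (6*t - 3/2)))"

definition Rcurve :: "real \<Rightarrow> real^3" where
  "Rcurve t = (let s = t - of_int \<lfloor>t\<rfloor>; k = nat \<lfloor>4 * s\<rfloor>
               in (rotz ^^ k) (r0 (s - real k / 4)))"

definition Gamma :: "(real^3) set" where
  "Gamma = range Rcurve"

definition north :: "real^3" where
  "north = vector [0, 0, 1]"

definition Aregion :: "(real^3) set" where
  "Aregion = Gamma \<union> connected_component_set (sphere 0 1 - Gamma) north"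

definition N0 :: "(real^3) set" where
  "N0 = sphere 0 1 - (Aregion \<union> uminus ` Aregion)"

end

theory Submission
  imports Defs
begin


definition Ins :: "real \<Rightarrow> real \<Rightarrow> real \<Rightarrow> bool" where
  "Ins x y z \<longleftrightarrow> ((2*y^2 \<le> x^2 \<or> 2*x^2 \<le> y^2) \<and> x^2 \<le> 1/2 \<and> y^2 \<le> 1/2) \<or>
                  (2*y^2 \<ge> x^2 \<and> 2*x^2 \<ge> y^2 \<and> sqrt 2 * \<bar>x*y\<bar> + \<bar>z\<bar> \<ge> 1)"

definition Kc :: "real \<Rightarrow> real \<Rightarrow> real \<Rightarrow> bool" where
  "Kc x y z \<longleftrightarrow> 2*y^2 > x^2 \<and> 2*x^2 > y^2 \<and> sqrt 2 * \<bar>x*y\<bar> + \<bar>z\<bar> < 1"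

lemma out_cases: "\<not> Ins x y z \<Longrightarrow> x^2 > 1/2 \<or> y^2 > 1/2 \<or> Kc x y z"
  unfolding Ins_def Kc_def by auto

lemma Kc_neg: "Kc (-x) (-y) (-z) = Kc x y z"
  unfolding Kc_def by (simp add: abs_mult)

lemma K_z:
  assumes n: "x^2+y^2+z^2=1" and K: "Kc x y z"
  shows "\<bar>z\<bar> < 1/2"
proof (rule ccontr)
  assume "\<not> \<bar>z\<bar> < 1/2"
  hence s: "\<bar>z\<bar> \<ge> 1/2" by simp
  have s1: "\<bar>z\<bar> \<le> 1"
  proof -
    have "z^2 \<le> 1" using n by (smt (verit) zero_le_power2)
    thus ?thesis using power2_le_imp_le[of "\<bar>z\<bar>" 1] by simp
  qed
  from K have b1: "2*y^2 > x^2" and b2: "2*x^2 > y^2" and c: "sqrt 2 * \<bar>x*y\<bar> + \<bar>z\<bar> < 1"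
    unfolding Kc_def by auto
  have "(2*y^2 - x^2)*(2*x^2-y^2) > 0" using b1 b2 by simp
  hence "(x^2+y^2)^2 < 9/2 * (x*y)^2" by (simp add: algebra_simps power2_eq_square)
  also have "9/2 * (x*y)^2 = (3/2 * sqrt 2 * \<bar>x*y\<bar>)^2"
  proof -
    have "(3/2 * sqrt 2 * \<bar>x*y\<bar>)^2 = (3/2)^2 * (sqrt 2)^2 * \<bar>x*y\<bar>^2" by (simp only: power_mult_distrib)
    also have "\<dots> = 9/2 * (x*y)^2" by (simp add: power2_eq_square)
    finally show ?thesis by simp
  qed
  finally have "x^2+y^2 < 3/2 * sqrt 2 * \<bar>x*y\<bar>"
    by (rule power2_less_imp_less) simp
  hence "sqrt 2 * \<bar>x*y\<bar> > 2/3 * (1 - z^2)" using n by simp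
  with c have cz: "2/3*(1-z^2) + \<bar>z\<bar> < 1" by linarith
  have key: "\<And>a::real. 2/3*(1-a^2)+a < 1 \<Longrightarrow> 1/2 \<le> a \<Longrightarrow> a \<le> 1 \<Longrightarrow> False"
  proof -
    fix a :: real
    assume ca: "2/3*(1-a^2)+a < 1" and a1: "1/2 \<le> a" and a2: "a \<le> 1"
    have e: "(2*a-1)*(a-1) = 3*(1-(2/3*(1-a^2)+a))" by (simp add: field_simps power2_eq_square)
    have pos: "0 < 3*(1-(2/3*(1-a^2)+a))" using ca by (smt (verit))
    have "0 < (2*a-1)*(a-1)" by (subst e) (rule pos)
    moreover have "(2*a-1)*(a-1) \<le> 0" using a1 a2 by (intro mult_nonneg_nonpos) auto
    ultimately show False by simp
  qed
  have "2/3*(1-\<bar>z\<bar>^2)+\<bar>z\<bar> < 1" using cz by simp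
  from key[OF this s s1] show False .
qed

lemma K_xy:
  assumes n: "x^2+y^2+z^2=1" and K: "Kc x y z"
  shows "x^2 > 1/4" "y^2 > 1/4" "(x+y)^2 > 1 \<or> (x-y)^2 > 1"
proof -
  have z: "\<bar>z\<bar> < 1/2" using K_z[OF n K] .
  have z2: "z^2 < 1/4"
  proof -
    have "z^2 = \<bar>z\<bar>^2" by simp
    also have "\<dots> < (1/2)^2" using z by (intro power_strict_mono) auto
    finally show ?thesis by (simp add: power2_eq_square)
  qed
  from K have b1: "2*y^2 > x^2" and b2: "2*x^2 > y^2" unfolding Kc_def by auto
  show x: "x^2 > 1/4" using n z2 b1 b2 by linarith
  show y: "y^2 > 1/4" using n z2 b1 b2 by linarith
  have ax: "\<bar>x\<bar> > 1/2" using x power2_less_imp_less[of "1/2" "\<bar>x\<bar>"] by (simp add: power2_eq_square)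
  have ay: "\<bar>y\<bar> > 1/2" using y power2_less_imp_less[of "1/2" "\<bar>y\<bar>"] by (simp add: power2_eq_square)
  have "\<bar>x\<bar>*\<bar>y\<bar> > 1/2*(1/2)" using ax ay by (intro mult_strict_mono) auto
  hence "\<bar>x*y\<bar> > 1/4" by (simp add: abs_mult)
  hence xy: "2*\<bar>x*y\<bar> > z^2" using z2 by linarith
  show "(x+y)^2 > 1 \<or> (x-y)^2 > 1"
  proof (cases "x*y \<ge> 0")
    case True
    then have "(x+y)^2 = x^2+y^2+2*\<bar>x*y\<bar>" by (simp add: power2_sum)
    then show ?thesis using xy n by auto
  next
    case False
    then have "(x-y)^2 = x^2+y^2+2*\<bar>x*y\<bar>" by (simp add: power2_diff)
    then show ?thesis using xy n by auto
  qed
qed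

lemma idn:
  fixes a1 a2 a3 b1 b2 b3 t :: real
  assumes "a1^2+a2^2+a3^2 = 1" "b1^2+b2^2+b3^2=1" "a1*b1+a2*b2+a3*b3 = 0"
  shows "((a2*b3-a3*b2)^2+(a3*b1-a1*b3)^2) * ((t*a1+b2)^2 + (t*b1-a2)^2) = (t*(a1*b2-a2*b1)+1)^2*(a2*b3-a3*b2)^2 + (t+(a1*b2-a2*b1))^2*(a3*b1-a1*b3)^2"
  using assms by algebra

lemma quad_neg:
  fixes A B C :: real
  assumes "B < 0" "B^2 - 4*A*C > 0"
  shows "\<exists>t\<ge>0. A*t^2 + B*t + C \<le> 0"
proof (cases "C \<le> 0")
  case True
  then show ?thesis by (intro exI[of _ 0]) auto
next
  case C: False
  show ?thesis
  proof (cases "A \<le> 0")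
    case True
    define t where "t = C / (-B)"
    have t0: "t \<ge> 0" unfolding t_def using C assms(1) by (intro divide_nonneg_pos) auto
    have "B*t + C = 0" unfolding t_def using assms(1) by (simp add: field_simps)
    moreover have "A*t^2 \<le> 0" using True by (simp add: mult_nonpos_nonneg)
    ultimately show ?thesis using t0 by (intro exI[of _ t]) auto
  next
    case A: False
    define t where "t = -B / (2*A)"
    have t0: "t \<ge> 0" unfolding t_def using A assms(1) by (intro divide_nonneg_pos) auto
    have "4*A*(A*t^2 + B*t + C) = 4*A*C - B^2" unfolding t_def using A
      by (simp add: field_simps power2_eq_square)
    hence "4*A*(A*t^2 + B*t + C) < 0" using assms(2) by simp
    hence "A*t^2 + B*t + C < 0" using A by (simp add: mult_less_0_iff)
    then show ?thesis using t0 by (intro exI[of _ t]) auto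
  qed
qed

lemma case_i_pos:
  fixes a1 a2 a3 b1 b2 b3 :: real
  assumes na: "a1^2+a2^2+a3^2 = 1" and nb: "b1^2+b2^2+b3^2=1" and ab: "a1*b1+a2*b2+a3*b3 = 0"
    and pa: "a1 > 0" "a1^2 > 1/2" and pb: "b2 > 0" "b2^2 > 1/2"
    and K: "Kc (a2*b3-a3*b2) (a3*b1-a1*b3) (a1*b2-a2*b1)"
  shows False
proof -
  define c1 where "c1 = a2*b3-a3*b2"
  define c2 where "c2 = a3*b1-a1*b3"
  define q where "q = a1*b2-a2*b1"
  have nc: "c1^2+c2^2+q^2 = 1" using na nb ab unfolding c1_def c2_def q_def by algebra
  have K': "Kc c1 c2 q" using K unfolding c1_def c2_def q_def .
  have sz: "\<bar>q\<bar> < 1/2" using K_z[OF nc K'] .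
  have "(a1*b2)^2 > (1/2)^2"
  proof -
    have "a1^2*b2^2 > 1/2*(1/2)" using pa pb by (intro mult_strict_mono) auto
    moreover have "(a1*b2)^2 = a1^2*b2^2" by (simp add: power_mult_distrib)
    moreover have "(1/2::real)^2 = 1/2*(1/2)" by (simp add: power2_eq_square)
    ultimately show ?thesis by linarith
  qed
  hence ab1: "a1*b2 > 1/2" by (rule power2_less_imp_less) (use pa pb in simp)
  have a2s: "a2^2 < 1/2" using na pa(2) zero_le_power2[of a3] by linarith
  have b1s: "b1^2 < 1/2" using nb pb(2) zero_le_power2[of b3] by linarith
  have "(a2*b1)^2 < (1/2)^2"
  proof -
    have "a2^2*b1^2 \<le> a2^2*(1/2)" using b1s by (intro mult_left_mono) auto
    also have "\<dots> < 1/2*(1/2)" using a2s by simp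
    finally have "a2^2*b1^2 < 1/2*(1/2)" .
    moreover have "(a2*b1)^2 = a2^2*b1^2" by (simp add: power_mult_distrib)
    moreover have "(1/2::real)^2 = 1/2*(1/2)" by (simp add: power2_eq_square)
    ultimately show ?thesis by linarith
  qed
  hence "\<bar>a2*b1\<bar> < 1/2" using power2_less_imp_less[of "\<bar>a2*b1\<bar>" "1/2"] by simp
  hence s0: "q > 0" unfolding q_def using ab1 by linarith
  have s1: "q < 1/2" using sz by linarith
  define r where "r = c1^2+c2^2"
  have rs: "r = 1 - q^2" using nc unfolding r_def by linarith
  have "q * q < 1 * 1" using s0 s1 by (intro mult_strict_mono) auto
  hence r0: "r > 0" using rs by (simp add: power2_eq_square)
  have Kc2: "2*(c1*c2)^2 < (1-q)^2"
  proof -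
    have "sqrt 2 * \<bar>c1*c2\<bar> < 1 - q" using K' s0 unfolding Kc_def by simp
    hence "(sqrt 2 * \<bar>c1*c2\<bar>)^2 < (1-q)^2" by (intro power_strict_mono) auto
    thus ?thesis by (simp add: power_mult_distrib)
  qed
  define A where "A = q^2*c1^2 + c2^2 - r/2"
  define B where "B = r*(2*q-1)"
  define C where "C = c1^2 + q^2*c2^2 - r/2"
  have B0: "B < 0" unfolding B_def using r0 s1 by (simp add: mult_pos_neg)
  have disc: "B^2 - 4*A*C = r^2*(2*(1-q)^2 - 4*(c1*c2)^2)"
    unfolding A_def B_def C_def using nc r_def by algebra
  have "B^2 - 4*A*C > 0" unfolding disc using r0 Kc2 by simp
  then obtain t where t0: "t \<ge> 0" and Gt: "A*t^2 + B*t + C \<le> 0" using quad_neg[OF B0] by blast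
  have G: "A*t^2 + B*t + C = (t*q+1)^2*c1^2 + (t+q)^2*c2^2 - r*(t+1)^2/2"
    unfolding A_def B_def C_def r_def by (simp add: field_simps power2_eq_square)
  have id: "r * ((t*a1+b2)^2 + (t*b1-a2)^2) = (t*q+1)^2*c1^2 + (t+q)^2*c2^2"
    unfolding r_def c1_def c2_def q_def using idn[OF na nb ab] by simp
  have "(t*a1+b2)^2 > (t+1)^2/2"
  proof -
    have "t^2*a1^2 \<ge> t^2*(1/2)" using pa by (intro mult_left_mono) auto
    moreover have "t*(a1*b2) \<ge> t*(1/2)" using ab1 t0 by (intro mult_left_mono) auto
    moreover have "(t*a1+b2)^2 = t^2*a1^2 + 2*(t*(a1*b2)) + b2^2" by (simp add: power2_eq_square algebra_simps)
    moreover have "(t+1)^2/2 = t^2*(1/2) + 2*(t*(1/2)) + 1/2" by (simp add: power2_eq_square field_simps)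
    ultimately show ?thesis using pb by linarith
  qed
  hence "r*(t*a1+b2)^2 > r*((t+1)^2/2)" using r0 by simp
  moreover have "r*(t*b1-a2)^2 \<ge> 0" using r0 by simp
  ultimately have "(t*q+1)^2*c1^2 + (t+q)^2*c2^2 > r*(t+1)^2/2" using id by (simp add: algebra_simps)
  with Gt G show False by linarith
qed

lemma case_i:
  fixes a1 a2 a3 b1 b2 b3 :: real
  assumes na: "a1^2+a2^2+a3^2 = 1" and nb: "b1^2+b2^2+b3^2=1" and ab: "a1*b1+a2*b2+a3*b3 = 0"
    and pa: "a1^2 > 1/2" and pb: "b2^2 > 1/2"
    and K: "Kc (a2*b3-a3*b2) (a3*b1-a1*b3) (a1*b2-a2*b1)"
  shows False
proof -
  have a0: "a1 \<noteq> 0" using pa by auto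
  have b0: "b2 \<noteq> 0" using pb by auto
  show False
  proof (cases "a1 > 0")
    case a: True
    show False
    proof (cases "b2 > 0")
      case True
      show False by (rule case_i_pos[OF na nb ab a pa True pb K])
    next
      case False
      then have "-b2 > 0" using b0 by simp
      moreover have "Kc (a2*(-b3)-a3*(-b2)) (a3*(-b1)-a1*(-b3)) (a1*(-b2)-a2*(-b1))"
        using K Kc_neg[of "a2*b3-a3*b2" "a3*b1-a1*b3" "a1*b2-a2*b1"] by (simp add: algebra_simps)
      ultimately show False using case_i_pos[of a1 a2 a3 "-b1" "-b2" "-b3"] na nb ab a pa pb by simp
    qed
  next
    case False
    then have a: "-a1 > 0" using a0 by simp
    show False
    proof (cases "b2 > 0")
      case True
      have "Kc ((-a2)*b3-(-a3)*b2) ((-a3)*b1-(-a1)*b3) ((-a1)*b2-(-a2)*b1)"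
        using K Kc_neg[of "a2*b3-a3*b2" "a3*b1-a1*b3" "a1*b2-a2*b1"] by (simp add: algebra_simps)
      then show False using case_i_pos[of "-a1" "-a2" "-a3" b1 b2 b3] na nb ab a pa pb True by simp
    next
      case False
      then have "-b2 > 0" using b0 by simp
      moreover have "Kc ((-a2)*(-b3)-(-a3)*(-b2)) ((-a3)*(-b1)-(-a1)*(-b3)) ((-a1)*(-b2)-(-a2)*(-b1))"
        using K by simp
      ultimately show False using case_i_pos[of "-a1" "-a2" "-a3" "-b1" "-b2" "-b3"] na nb ab a pa pb by simp
    qed
  qed
qed

lemma inner3: "(u::real^3) \<bullet> v = u$1 * v$1 + u$2 * v$2 + u$3 * v$3"
  by (simp add: inner_vec_def sum_3)

definition ON :: "real^3 \<Rightarrow> real^3 \<Rightarrow> real^3 \<Rightarrow> bool" where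
  "ON u v w \<longleftrightarrow> u \<bullet> u = 1 \<and> v \<bullet> v = 1 \<and> w \<bullet> w = 1 \<and> u \<bullet> v = 0 \<and> u \<bullet> w = 0 \<and> v \<bullet> w = 0"

lemma ON_perm: "ON u v w \<Longrightarrow> ON v u w" "ON u v w \<Longrightarrow> ON u w v"
  unfolding ON_def by (auto simp: inner_commute)

lemma frame_cross:
  assumes "ON u v w"
  shows "w = cross3 u v \<or> w = -(cross3 u v)"
proof -
  have h: "(u$1)^2+(u$2)^2+(u$3)^2 = 1" "(v$1)^2+(v$2)^2+(v$3)^2 = 1" "(w$1)^2+(w$2)^2+(w$3)^2 = 1"
     "u$1 * v$1 + u$2 * v$2 + u$3 * v$3 = 0" "u$1 * w$1 + u$2 * w$2 + u$3 * w$3 = 0"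
     "v$1 * w$1 + v$2 * w$2 + v$3 * w$3 = 0"
    using assms unfolding ON_def inner3 by (simp_all add: power2_eq_square)
  define k where "k = w$1 * (u$2 * v$3 - u$3 * v$2) + w$2 * (u$3 * v$1 - u$1 * v$3) + w$3 * (u$1 * v$2 - u$2 * v$1)"
  have ex: "\<And>a1 a2 a3 b1 b2 b3 w1 w2 w3::real. a1^2+a2^2+a3^2 = 1 \<Longrightarrow> b1^2+b2^2+b3^2=1 \<Longrightarrow> a1*b1+a2*b2+a3*b3 = 0 \<Longrightarrow>
    w1 = (w1*a1+w2*a2+w3*a3)*a1 + (w1*b1+w2*b2+w3*b3)*b1 + (w1*(a2*b3-a3*b2)+w2*(a3*b1-a1*b3)+w3*(a1*b2-a2*b1))*(a2*b3-a3*b2)"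
    by algebra
  have h5: "w$1*u$1+w$2*u$2+w$3*u$3 = 0" "w$2*u$2+w$3*u$3+w$1*u$1 = 0" "w$3*u$3+w$1*u$1+w$2*u$2 = 0"
    using h(5) by (simp_all add: algebra_simps)
  have h6: "w$1 * v$1+w$2 * v$2+w$3 * v$3 = 0" "w$2 * v$2+w$3 * v$3+w$1 * v$1 = 0" "w$3 * v$3+w$1 * v$1+w$2 * v$2 = 0"
    using h(6) by (simp_all add: algebra_simps)
  have h1': "(u$2)^2+(u$3)^2+(u$1)^2 = 1" "(u$3)^2+(u$1)^2+(u$2)^2 = 1" using h(1) by simp_all
  have h2': "(v$2)^2+(v$3)^2+(v$1)^2 = 1" "(v$3)^2+(v$1)^2+(v$2)^2 = 1" using h(2) by simp_all
  have h4': "u$2 * v$2+u$3 * v$3+u$1 * v$1 = 0" "u$3 * v$3+u$1 * v$1+u$2 * v$2 = 0" using h(4) by simp_all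
  have k2: "w$2 * (u$3 * v$1 - u$1 * v$3) + w$3 * (u$1 * v$2 - u$2 * v$1) + w$1 * (u$2 * v$3 - u$3 * v$2) = k"
    unfolding k_def by simp
  have k3: "w$3 * (u$1 * v$2 - u$2 * v$1) + w$1 * (u$2 * v$3 - u$3 * v$2) + w$2 * (u$3 * v$1 - u$1 * v$3) = k"
    unfolding k_def by simp
  have e1: "w$1 = k * (u$2 * v$3 - u$3 * v$2)"
    using ex[OF h(1,2,4), of "w$1" "w$2" "w$3"] unfolding h5 h6 k_def[symmetric] by simp
  have e2: "w$2 = k * (u$3 * v$1 - u$1 * v$3)"
    using ex[OF h1'(1) h2'(1) h4'(1), of "w$2" "w$3" "w$1"] unfolding h5 h6 k2 by simp
  have e3: "w$3 = k * (u$1 * v$2 - u$2 * v$1)"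
    using ex[OF h1'(2) h2'(2) h4'(2), of "w$3" "w$1" "w$2"] unfolding h5 h6 k3 by simp
  have nc: "(u$2 * v$3 - u$3 * v$2)^2 + (u$3 * v$1 - u$1 * v$3)^2 + (u$1 * v$2 - u$2 * v$1)^2 = 1"
    using h(1,2,4) by algebra
  have q1: "(w$1)^2 = k^2 * (u$2 * v$3 - u$3 * v$2)^2" using e1 by (simp add: power_mult_distrib)
  have q2: "(w$2)^2 = k^2 * (u$3 * v$1 - u$1 * v$3)^2" using e2 by (simp add: power_mult_distrib)
  have q3: "(w$3)^2 = k^2 * (u$1 * v$2 - u$2 * v$1)^2" using e3 by (simp add: power_mult_distrib)
  have "k^2 * (u$2 * v$3 - u$3 * v$2)^2 + k^2 * (u$3 * v$1 - u$1 * v$3)^2 + k^2 * (u$1 * v$2 - u$2 * v$1)^2 = 1"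
    using h(3) q1 q2 q3 by linarith
  hence "k^2 * ((u$2 * v$3 - u$3 * v$2)^2 + (u$3 * v$1 - u$1 * v$3)^2 + (u$1 * v$2 - u$2 * v$1)^2) = 1"
    by (simp only: distrib_left)
  hence "k^2 = 1" using nc by simp
  hence "k = 1 \<or> k = -1" by (simp add: power2_eq_1_iff)
  thus ?thesis
  proof
    assume "k = 1"
    hence "w = cross3 u v" using e1 e2 e3 by (simp add: vec_eq_iff cross_components forall_3 algebra_simps)
    thus ?thesis ..
  next
    assume "k = -1"
    hence "w = -(cross3 u v)" using e1 e2 e3 by (simp add: vec_eq_iff cross_components forall_3 algebra_simps)
    thus ?thesis ..
  qed
qed



lemma ON_norms:
  assumes "ON u v w"
  shows "(u$1)^2+(u$2)^2+(u$3)^2 = 1" "(v$1)^2+(v$2)^2+(v$3)^2 = 1" "(w$1)^2+(w$2)^2+(w$3)^2 = 1"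
     "u$1 * v$1 + u$2 * v$2 + u$3 * v$3 = 0"
  using assms unfolding ON_def inner3 by (simp_all add: power2_eq_square)

lemma ON_cross_comp:
  assumes "ON u v w"
  obtains e where "e = 1 \<or> e = -1" "w$1 = e * (u$2 * v$3 - u$3 * v$2)"
     "w$2 = e * (u$3 * v$1 - u$1 * v$3)" "w$3 = e * (u$1 * v$2 - u$2 * v$1)"
proof -
  from frame_cross[OF assms] show ?thesis
  proof
    assume "w = cross3 u v"
    then show ?thesis using that[of 1] by (simp add: cross_components algebra_simps)
  next
    assume "w = - cross3 u v"
    then show ?thesis using that[of "-1"] by (simp add: cross_components algebra_simps)
  qed
qed

lemma ON_cols:
  assumes "ON u v w"
  shows "(u$1)^2+(v$1)^2+(w$1)^2 = 1" "(u$2)^2+(v$2)^2+(w$2)^2 = 1"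
        "u$1*u$2 + v$1 * v$2 + w$1*w$2 = 0" "(u$1+u$2)^2+(v$1+v$2)^2+(w$1+w$2)^2 = 2"
        "(u$1-u$2)^2+(v$1-v$2)^2+(w$1-w$2)^2 = 2"
proof -
  note h = ON_norms[OF assms]
  obtain e where e: "e = 1 \<or> e = -1" "w$1 = e * (u$2 * v$3 - u$3 * v$2)"
     "w$2 = e * (u$3 * v$1 - u$1 * v$3)" "w$3 = e * (u$1 * v$2 - u$2 * v$1)"
    using ON_cross_comp[OF assms] by blast
  have e2: "e^2 = 1" using e(1) by auto
  have c1: "(u$1)^2+(v$1)^2+(u$2 * v$3 - u$3 * v$2)^2 = 1" using h(1,2,4) by algebra
  have c2: "(u$2)^2+(v$2)^2+(u$3 * v$1 - u$1 * v$3)^2 = 1" using h(1,2,4) by algebra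
  have c3: "u$1*u$2 + v$1 * v$2 + (u$2 * v$3 - u$3 * v$2)*(u$3 * v$1 - u$1 * v$3) = 0" using h(1,2,4) by algebra
  show 1: "(u$1)^2+(v$1)^2+(w$1)^2 = 1" using c1 e2 unfolding e(2) by (simp add: power_mult_distrib)
  show 2: "(u$2)^2+(v$2)^2+(w$2)^2 = 1" using c2 e2 unfolding e(3) by (simp add: power_mult_distrib)
  have "w$1*w$2 = e^2 * ((u$2 * v$3 - u$3 * v$2)*(u$3 * v$1 - u$1 * v$3))"
    unfolding e(2,3) by (simp add: power2_eq_square)
  show 3: "u$1*u$2 + v$1 * v$2 + w$1*w$2 = 0" using c3 e2 \<open>w$1*w$2 = _\<close> by simp
  show "(u$1+u$2)^2+(v$1+v$2)^2+(w$1+w$2)^2 = 2" using 1 2 3 by (simp add: power2_sum algebra_simps)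
  show "(u$1-u$2)^2+(v$1-v$2)^2+(w$1-w$2)^2 = 2" using 1 2 3 by (simp add: power2_diff algebra_simps)
qed

lemma caseI_vec:
  assumes "ON u v w" "(u$1)^2 > 1/2" "(v$2)^2 > 1/2" "Kc (w$1) (w$2) (w$3)"
  shows False
proof -
  note h = ON_norms[OF assms(1)]
  obtain e where e: "e = 1 \<or> e = -1" "w$1 = e * (u$2 * v$3 - u$3 * v$2)"
     "w$2 = e * (u$3 * v$1 - u$1 * v$3)" "w$3 = e * (u$1 * v$2 - u$2 * v$1)"
    using ON_cross_comp[OF assms(1)] by blast
  have "Kc (u$2 * v$3 - u$3 * v$2) (u$3 * v$1 - u$1 * v$3) (u$1 * v$2 - u$2 * v$1)"
    using e(1)
  proof
    assume "e = 1" then show ?thesis using assms(4) e by simp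
  next
    assume "e = -1" then show ?thesis using assms(4) e Kc_neg[of "u$2 * v$3 - u$3 * v$2" "u$3 * v$1 - u$1 * v$3" "u$1 * v$2 - u$2 * v$1"] by simp
  qed
  then show False using case_i[OF h(1,2,4) assms(2,3)] by simp
qed

lemma ON_perms:
  assumes "ON u v w"
  shows "ON u w v" "ON v u w" "ON v w u" "ON w u v" "ON w v u"
  using assms unfolding ON_def by (auto simp: inner_commute)

lemma KK_lemma:
  assumes on: "ON u v w" and Ku: "Kc (u$1) (u$2) (u$3)" and Kv: "Kc (v$1) (v$2) (v$3)"
    and w: "\<not> Ins (w$1) (w$2) (w$3)"
  shows False
proof -
  note n = ON_norms[OF on] and c = ON_cols[OF on]
  have nw: "(w$1)^2+(w$2)^2+(w$3)^2 = 1" using n(3) .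
  note ku = K_xy[OF n(1) Ku] and kv = K_xy[OF n(2) Kv]
  from out_cases[OF w] show False
  proof (elim disjE)
    assume "(w$1)^2 > 1/2" then show False using ku(1) kv(1) c(1) by linarith
  next
    assume "(w$2)^2 > 1/2" then show False using ku(2) kv(2) c(2) by linarith
  next
    assume Kw: "Kc (w$1) (w$2) (w$3)"
    note kw = K_xy[OF nw Kw]
    have p1: "(u$1+u$2)^2 \<ge> 0" "(v$1+v$2)^2 \<ge> 0" "(w$1+w$2)^2 \<ge> 0" by simp_all
    have p2: "(u$1-u$2)^2 \<ge> 0" "(v$1-v$2)^2 \<ge> 0" "(w$1-w$2)^2 \<ge> 0" by simp_all
    show False using ku(3) kv(3) kw(3) c(4) c(5) p1 p2 by linarith
  qed
qed

lemma core:
  assumes on: "ON u v w" and nu: "\<not> Ins (u$1) (u$2) (u$3)" and nv: "\<not> Ins (v$1) (v$2) (v$3)"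
    and nw: "\<not> Ins (w$1) (w$2) (w$3)"
  shows False
proof -
  note c = ON_cols[OF on] and P = ON_perms[OF on]
  have p: "(u$1)^2 \<ge> 0" "(v$1)^2 \<ge> 0" "(w$1)^2 \<ge> 0" "(u$2)^2 \<ge> 0" "(v$2)^2 \<ge> 0" "(w$2)^2 \<ge> 0" by simp_all
  have X: "\<not> ((u$1)^2 > 1/2 \<and> (v$1)^2 > 1/2)" "\<not> ((u$1)^2 > 1/2 \<and> (w$1)^2 > 1/2)" "\<not> ((v$1)^2 > 1/2 \<and> (w$1)^2 > 1/2)"
    using c(1) p by linarith+
  have Y: "\<not> ((u$2)^2 > 1/2 \<and> (v$2)^2 > 1/2)" "\<not> ((u$2)^2 > 1/2 \<and> (w$2)^2 > 1/2)" "\<not> ((v$2)^2 > 1/2 \<and> (w$2)^2 > 1/2)"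
    using c(2) p by linarith+
  have K: "\<not> (Kc (u$1) (u$2) (u$3) \<and> Kc (v$1) (v$2) (v$3))"
          "\<not> (Kc (u$1) (u$2) (u$3) \<and> Kc (w$1) (w$2) (w$3))"
          "\<not> (Kc (v$1) (v$2) (v$3) \<and> Kc (w$1) (w$2) (w$3))"
    using KK_lemma[OF on _ _ nw] KK_lemma[OF P(1) _ _ nv] KK_lemma[OF P(3) _ _ nu] by blast+
  have I: "\<not> ((u$1)^2 > 1/2 \<and> (v$2)^2 > 1/2 \<and> Kc (w$1) (w$2) (w$3))"
          "\<not> ((u$1)^2 > 1/2 \<and> (w$2)^2 > 1/2 \<and> Kc (v$1) (v$2) (v$3))"
          "\<not> ((v$1)^2 > 1/2 \<and> (u$2)^2 > 1/2 \<and> Kc (w$1) (w$2) (w$3))"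
          "\<not> ((v$1)^2 > 1/2 \<and> (w$2)^2 > 1/2 \<and> Kc (u$1) (u$2) (u$3))"
          "\<not> ((w$1)^2 > 1/2 \<and> (u$2)^2 > 1/2 \<and> Kc (v$1) (v$2) (v$3))"
          "\<not> ((w$1)^2 > 1/2 \<and> (v$2)^2 > 1/2 \<and> Kc (u$1) (u$2) (u$3))"
    using caseI_vec[OF on] caseI_vec[OF P(1)] caseI_vec[OF P(2)] caseI_vec[OF P(3)]
      caseI_vec[OF P(4)] caseI_vec[OF P(5)] by blast+
  show False using out_cases[OF nu] out_cases[OF nv] out_cases[OF nw] X Y K I by blast
qed



definition Io :: "real \<Rightarrow> real \<Rightarrow> real \<Rightarrow> bool" where
  "Io x y z \<longleftrightarrow> z > 0 \<and> (((2*y^2 \<le> x^2 \<or> 2*x^2 \<le> y^2) \<and> x^2 < 1/2 \<and> y^2 < 1/2) \<or>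
                  (2*y^2 \<ge> x^2 \<and> 2*x^2 \<ge> y^2 \<and> sqrt 2 * \<bar>x*y\<bar> + z > 1))"

definition IoV :: "real^3 \<Rightarrow> bool" where "IoV p = Io (p$1) (p$2) (p$3)"

lemma rotz_comp [simp]: "rotz v $ 1 = - (v$2)" "rotz v $ 2 = v$1" "rotz v $ 3 = v$3"
  unfolding rotz_def by simp_all

lemma IoV_rotz: "IoV (rotz v) = IoV v"
  unfolding IoV_def Io_def by (auto simp: abs_mult mult.commute)

lemma IoV_rotz_pow: "IoV ((rotz ^^ k) v) = IoV v"
  by (induction k) (simp_all add: IoV_rotz)

lemma sqrt2_sq [simp]: "(sqrt 2)^2 = (2::real)" by simp

lemma not_Io_r1:
  assumes "-1/2 \<le> t" "t < 0"
  shows "\<not> IoV (r1 t)"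
proof -
  have x: "(1 / sqrt 2)^2 = (1/2::real)" by (simp add: power_divide)
  have "sqrt (1/2 - t^2) \<le> 1 - \<bar>t\<bar>"
  proof (rule real_le_lsqrt)
    show "0 \<le> 1 - \<bar>t\<bar>" using assms by simp
    have "(1 - \<bar>t\<bar>)^2 - (1/2 - t^2) = 2*(\<bar>t\<bar> - 1/2)^2"
      by (simp add: power2_eq_square algebra_simps)
    thus "1/2 - t^2 \<le> (1 - \<bar>t\<bar>)^2" by (smt (verit) zero_le_power2)
  qed
  moreover have "sqrt 2 * \<bar>1 / sqrt 2 * t\<bar> = \<bar>t\<bar>" by (simp add: abs_mult)
  ultimately show ?thesis unfolding IoV_def Io_def r1_def using x by auto
qed

lemma not_Io_r2:
  assumes "-1/2 \<le> t" "t < 0"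
  shows "\<not> IoV (r2 t)"
proof -
  have y: "(1 / sqrt 2)^2 = (1/2::real)" by (simp add: power_divide)
  define X where "X = (1/2 + t) / (1 + t)"
  have q0: "0 \<le> X" unfolding X_def using assms by simp
  have q1: "X < 1/2" unfolding X_def using assms by (simp add: field_simps)
  have "X^2 < (1/2)^2" using q0 q1 by (intro power_strict_mono) auto
  hence "2*(-X)^2 < 1/2" by (simp add: power2_eq_square)
  thus ?thesis unfolding IoV_def Io_def r2_def X_def[symmetric] using y by auto
qed

lemma not_Io_r3:
  assumes "-1/2 \<le> t" "t < 0"
  shows "\<not> IoV (r3 t)"
proof -
  define S where "S = sqrt (1/2 - t^2)"
  have t2: "t^2 \<le> 1/4"
  proof -
    have "\<bar>t\<bar> \<le> 1/2" using assms by simp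
    hence "\<bar>t\<bar>^2 \<le> (1/2)^2" by (intro power_mono) auto
    thus ?thesis by (simp add: power2_eq_square)
  qed
  have S2: "S^2 = 1/2 - t^2" unfolding S_def using t2 by simp
  have S0: "S > 0" unfolding S_def using t2 by simp
  have r2pos: "sqrt 2 > 0" by simp
  have ne: "1 + t > 0" using assms by simp
  have ne3: "sqrt 2 * (1 + t) > 0" using ne by simp
  have "sqrt 2 + t * sqrt 2 = sqrt 2 * (1 + t)" by (simp add: algebra_simps)
  hence ne2: "sqrt 2 + t * sqrt 2 \<noteq> 0" "sqrt 2 * (1 + t) \<noteq> 0" using ne3 by auto
  have c1: "r3 t $ 1 = - (S / (sqrt 2 * (1 + t)))"
    unfolding r3_def r1_def r2_def cross3_def S_def[symmetric] using ne ne2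
    by (simp add: field_simps)
  have c2a: "r3 t $ 2 = S*(-((1/2+t)/(1+t))) - (1/sqrt 2)*((1/sqrt 2)*(S/(1+t)))"
    unfolding r3_def r1_def r2_def cross3_def S_def[symmetric] by simp
  have c2b: "(1/sqrt 2)*((1/sqrt 2)*(S/(1+t))) = S/(2*(1+t))"
  proof -
    have "(1 / sqrt 2)^2 = (1/2::real)" by (simp add: power_divide)
    hence h: "1 / sqrt 2 * (1 / sqrt 2) = (1/2::real)" by (simp add: power2_eq_square)
    have "(1/sqrt 2)*((1/sqrt 2)*(S/(1+t))) = (1/sqrt 2 * (1/sqrt 2))*(S/(1+t))" by (simp only: mult.assoc)
    also have "\<dots> = S/(2*(1+t))" unfolding h by simp
    finally show ?thesis .
  qed
  have ne0: "1 + t \<noteq> 0" using ne by simp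
  have c2: "r3 t $ 2 = - S"
    unfolding c2a c2b using ne0 by (simp add: divide_simps) algebra
  have c3: "r3 t $ 3 = (1/2 + t + t^2) / (1 + t)"
    unfolding r3_def r1_def r2_def cross3_def S_def[symmetric] using ne ne2
    by (simp add: field_simps power2_eq_square)
  have x2: "(r3 t $ 1)^2 = S^2 / (2 * (1+t)^2)" unfolding c1 by (simp add: power_divide power_mult_distrib)
  have y2: "(r3 t $ 2)^2 = S^2" unfolding c2 by simp
  have xy: "sqrt 2 * \<bar>r3 t $ 1 * r3 t $ 2\<bar> + r3 t $ 3 = 1"
  proof -
    have e: "r3 t $ 1 * r3 t $ 2 = S^2/(sqrt 2*(1+t))" unfolding c1 c2 by (simp add: power2_eq_square)
    have p: "S^2/(sqrt 2*(1+t)) \<ge> 0" using ne3 by simp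
    have "sqrt 2 * (S^2/(sqrt 2*(1+t))) = S^2 / (1 + t)" using ne0 by (simp add: divide_simps)
    then have "sqrt 2 * \<bar>r3 t $ 1 * r3 t $ 2\<bar> = S^2 / (1 + t)" unfolding e abs_of_nonneg[OF p] .
    thus ?thesis unfolding c3 S2 using ne by (simp add: field_simps power2_eq_square)
  qed
  have A: "\<not> (2*(r3 t $ 2)^2 \<le> (r3 t $ 1)^2 \<and> (r3 t $ 1)^2 < 1/2)"
  proof
    assume h: "2*(r3 t $ 2)^2 \<le> (r3 t $ 1)^2 \<and> (r3 t $ 1)^2 < 1/2"
    hence "2*S^2 \<le> S^2 / (2 * (1+t)^2)" unfolding x2 y2 by simp
    hence "4*(1+t)^2 * S^2 \<le> S^2" using ne by (simp add: field_simps)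
    hence "4*(1+t)^2 \<le> 1" using S0 by simp
    moreover have eq: "(2*(1+t))^2 = 4*(1+t)^2" by (simp only: power_mult_distrib) simp
    ultimately have "(2*(1+t))^2 \<le> 1^2" by (simp only: eq) simp
    hence "2*(1+t) \<le> 1" by (rule power2_le_imp_le) simp
    hence "t = -1/2" using assms by simp
    hence "(r3 t $ 1)^2 = 1/2" unfolding x2 S2 by (simp add: power2_eq_square)
    with h show False by simp
  qed
  have B: "\<not> (2*(r3 t $ 1)^2 \<le> (r3 t $ 2)^2)"
  proof
    assume "2*(r3 t $ 1)^2 \<le> (r3 t $ 2)^2"
    hence "S^2 / (1+t)^2 \<le> S^2" unfolding x2 y2 by simp
    hence "S^2 \<le> S^2 * (1+t)^2" using ne by (simp add: field_simps)
    hence "1 \<le> (1+t)^2" using S0 by simp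
    moreover have "(1+t)^2 < 1^2" using ne assms by (intro power_strict_mono) auto
    ultimately show False by simp
  qed
  show ?thesis unfolding IoV_def Io_def using A B xy by auto
qed

lemma not_Io_r0:
  assumes "0 \<le> t" "t < 1/4"
  shows "\<not> IoV (r0 t)"
  unfolding r0_def using assms not_Io_r1[of "6*t - 1/2"] not_Io_r2[of "6*t - 1"] not_Io_r3[of "6*t - 3/2"]
  by (auto simp: IoV_rotz_pow)

lemma not_Io_Rcurve: "\<not> IoV (Rcurve t)"
proof -
  define s where "s = t - of_int \<lfloor>t\<rfloor>"
  have s0: "0 \<le> s" unfolding s_def by (simp add: of_int_floor_le)
  have s1: "s < 1" unfolding s_def using real_of_int_floor_add_one_gt[of t] by linarith
  define k where "k = nat \<lfloor>4 * s\<rfloor>"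
  have f0: "0 \<le> \<lfloor>4 * s\<rfloor>" using s0 by simp
  have kr: "real k = of_int \<lfloor>4 * s\<rfloor>" unfolding k_def using f0 by simp
  have "of_int \<lfloor>4 * s\<rfloor> \<le> 4 * s" by (rule of_int_floor_le)
  moreover have "4 * s < of_int \<lfloor>4 * s\<rfloor> + 1" by (rule real_of_int_floor_add_one_gt)
  ultimately have "0 \<le> s - real k / 4" "s - real k / 4 < 1/4" unfolding kr by linarith+
  hence "\<not> IoV (r0 (s - real k / 4))" by (rule not_Io_r0)
  then show ?thesis unfolding Rcurve_def Let_def s_def[symmetric] k_def[symmetric] by (simp add: IoV_rotz_pow)
qed

lemma Gamma_not_Io: "p \<in> Gamma \<Longrightarrow> \<not> IoV p"
  unfolding Gamma_def using not_Io_Rcurve by auto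

lemma Io_path:
  fixes x y z l :: real
  assumes n: "x^2+y^2+z^2=1" and z: "z>0" and I: "Ins x y z" and l0: "0 \<le> l" and l1: "l < 1"
  shows "Io (l*x) (l*y) (sqrt (1 - l^2*(x^2+y^2)))"
proof -
  define \<rho> where "\<rho> = x^2+y^2"
  have r1: "\<rho> = 1 - z^2" unfolding \<rho>_def using n by linarith
  have r0: "\<rho> \<ge> 0" unfolding \<rho>_def by simp
  have rl: "\<rho> < 1" using r1 z by simp
  have l2: "l^2 < 1" using l0 l1 by (simp add: power_less_one_iff abs_less_iff)
  have l2': "l^2 \<ge> 0" by simp
  have "l^2*\<rho> < 1"
  proof -
    have "l^2*\<rho> \<le> 1*\<rho>" using l2 r0 by (intro mult_right_mono) auto
    thus ?thesis using rl by simp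
  qed
  hence zp: "sqrt (1 - l^2*(x^2+y^2)) > 0" unfolding \<rho>_def[symmetric] by simp
  have sq: "(l*x)^2 = l^2*x^2" "(l*y)^2 = l^2*y^2" by (simp_all add: power_mult_distrib)
  from I[unfolded Ins_def] consider
    (A) "2*y^2 \<le> x^2 \<or> 2*x^2 \<le> y^2" "x^2 \<le> 1/2" "y^2 \<le> 1/2"
    | (B) "x^2 \<le> 2*y^2" "y^2 \<le> 2*x^2" "1 \<le> sqrt 2 * \<bar>x*y\<bar> + \<bar>z\<bar>" by linarith
  then show ?thesis
  proof cases
    case A
    note a = A(1) and bx = A(2)
    have "y^2 \<le> 1/2" using A(3) .
    have "l^2*x^2 \<le> l^2*(1/2)" "l^2*y^2 \<le> l^2*(1/2)" using bx \<open>y^2 \<le> 1/2\<close> by (intro mult_left_mono; simp)+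
    moreover have "l^2*(1/2) < 1/2" using l2 by simp
    moreover have "2*(l^2*y^2) \<le> l^2*x^2 \<or> 2*(l^2*x^2) \<le> l^2*y^2"
    proof -
      have m: "\<And>A B. A \<le> B \<Longrightarrow> l^2*A \<le> l^2*B" by (rule mult_left_mono) simp_all
      from a show ?thesis
      proof
        assume "2*y^2 \<le> x^2" from m[OF this] show ?thesis by (simp add: mult.left_commute)
      next
        assume "2*x^2 \<le> y^2" from m[OF this] show ?thesis by (simp add: mult.left_commute)
      qed
    qed
    ultimately show ?thesis unfolding Io_def sq using zp by auto
  next
    case B
    note b1 = B(1) and b2 = B(2) and c = B(3)
    have m: "\<And>A B. A \<le> B \<Longrightarrow> l^2*A \<le> l^2*B" by (rule mult_left_mono) simp_all
    have b: "(l*x)^2 \<le> 2*(l*y)^2" "(l*y)^2 \<le> 2*(l*x)^2" unfolding sq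
      using m[OF b1] m[OF b2] by (simp_all add: mult.left_commute)
    show ?thesis
    proof (cases "l = 0 \<or> \<rho> = 0")
      case True
      then have ex: "l*x = 0" "l*y = 0" unfolding \<rho>_def by (auto simp: sum_power2_eq_zero_iff)
      show ?thesis unfolding Io_def ex using zp by simp
    next
      case False
      then have lp: "l > 0" and rp: "\<rho> > 0" using l0 r0 by auto
      define \<mu> where "\<mu> = l^2"
      have mu0: "\<mu> > 0" and mu1: "\<mu> < 1" unfolding \<mu>_def using lp l2 by auto
      have zs: "z = sqrt (1 - \<rho>)" using r1 z by (simp add: real_sqrt_unique[symmetric])
      have "z^2 < 1^2" using rp r1 by simp
      hence zl: "z < 1" by (rule power2_less_imp_less) simp
      have key: "1 - \<mu> + \<mu>*z < sqrt (1 - \<mu>*\<rho>)"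
      proof (rule real_less_rsqrt)
        have "1 - \<mu>*\<rho> - (1 - \<mu> + \<mu>*z)^2 = \<mu>*(1-z)^2*(1-\<mu>)"
          unfolding r1 by (simp add: algebra_simps power2_eq_square)
        moreover have "\<mu>*(1-z)^2*(1-\<mu>) > 0" using mu0 mu1 zl by simp
        ultimately show "(1 - \<mu> + \<mu>*z)^2 < 1 - \<mu>*\<rho>" by linarith
      qed
      have "\<bar>l*x*(l*y)\<bar> = \<mu>*\<bar>x*y\<bar>" unfolding \<mu>_def by (simp add: abs_mult power2_eq_square)
      moreover have "\<mu>*(sqrt 2 * \<bar>x*y\<bar> + z - 1) \<ge> 0" using mu0 c z by simp
      ultimately have "sqrt 2 * \<bar>l*x*(l*y)\<bar> + sqrt (1 - \<mu>*\<rho>) > 1"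
        using key by (simp add: algebra_simps)
      then show ?thesis unfolding Io_def using zp b unfolding \<mu>_def \<rho>_def by auto
    qed
  qed
qed



lemma sphere3: "p \<in> sphere (0::real^3) 1 \<longleftrightarrow> (p$1)^2 + (p$2)^2 + (p$3)^2 = 1"
  by (simp add: norm_eq_1 inner3 power2_eq_square)

lemma Ins_in_A:
  assumes p: "p \<in> sphere (0::real^3) 1" and z: "p$3 > 0" and I: "Ins (p$1) (p$2) (p$3)"
  shows "p \<in> Aregion"
proof (cases "p \<in> Gamma")
  case True thus ?thesis unfolding Aregion_def by simp
next
  case False
  have n: "(p$1)^2 + (p$2)^2 + (p$3)^2 = 1" using p sphere3 by blast
  define \<rho> where "\<rho> = (p$1)^2+(p$2)^2"
  have r0: "\<rho> \<ge> 0" unfolding \<rho>_def by simp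
  have r1: "\<rho> \<le> 1" unfolding \<rho>_def using n zero_le_power2[of "p$3"] by linarith
  define h where "h = (vector [p$1, p$2, 0] :: real^3)"
  define g where "g = (\<lambda>l::real. l *\<^sub>R h + sqrt (1 - l^2*\<rho>) *\<^sub>R north)"
  have c: "g l $ 1 = l * p$1" "g l $ 2 = l * p$2" "g l $ 3 = sqrt (1 - l^2*\<rho>)" for l
    by (simp_all add: g_def h_def north_def)
  have cont: "continuous_on {0..1} g" unfolding g_def by (intro continuous_intros)
  define T where "T = g ` {0..1}"
  have conn: "connected T" unfolding T_def by (rule connected_continuous_image[OF cont connected_Icc])
  have g0: "g 0 = north" by (simp add: vec_eq_iff forall_3 c north_def)
  have p3: "p$3 = sqrt (1 - \<rho>)"
  proof -
    have "(p$3)^2 = 1 - \<rho>" unfolding \<rho>_def using n by linarith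
    thus ?thesis using z by (metis abs_of_pos real_sqrt_abs)
  qed
  have g1: "g 1 = p" by (simp add: vec_eq_iff forall_3 c p3)
  have sub: "T \<subseteq> sphere 0 1 - Gamma"
  proof
    fix q assume "q \<in> T"
    then obtain l where l: "0 \<le> l" "l \<le> 1" and q: "q = g l" unfolding T_def by auto
    have "l^2 \<le> 1" using l by (simp add: power_le_one)
    hence "l^2*\<rho> \<le> 1*1" using r0 r1 by (intro mult_mono) auto
    hence sq: "(sqrt (1 - l^2*\<rho>))^2 = 1 - l^2*\<rho>" by simp
    have "q \<in> sphere 0 1" unfolding sphere3 q c sq unfolding \<rho>_def
      by (simp only: power_mult_distrib) (simp add: ring_distribs)
    moreover have "q \<notin> Gamma"
    proof (cases "l = 1")
      case True thus ?thesis using q g1 False by simp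
    next
      case False
      hence "l < 1" using l by simp
      from Io_path[OF n z I l(1) this] have "IoV q" unfolding IoV_def q c \<rho>_def .
      thus ?thesis using Gamma_not_Io by blast
    qed
    ultimately show "q \<in> sphere 0 1 - Gamma" by simp
  qed
  have "north \<in> T" unfolding T_def using g0 by force
  from connected_component_maximal[OF this conn sub] have "T \<subseteq> connected_component_set (sphere 0 1 - Gamma) north" .
  moreover have "p \<in> T" unfolding T_def using g1 by force
  ultimately show ?thesis unfolding Aregion_def by blast
qed

lemma Ins_neg: "Ins (-x) (-y) (-z) = Ins x y z"
  unfolding Ins_def by simp

lemma Ins_z: assumes "x^2+y^2+z^2 = 1" "Ins x y z" shows "z \<noteq> 0"
proof
  assume z: "z = 0"
  hence n: "x^2 + y^2 = 1" using assms(1) by simp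
  from assms(2) show False unfolding Ins_def
  proof (elim disjE conjE)
    assume "2*y^2 \<le> x^2" "x^2 \<le> 1/2" "y^2 \<le> 1/2" thus False using n by linarith
  next
    assume "2*x^2 \<le> y^2" "x^2 \<le> 1/2" "y^2 \<le> 1/2" thus False using n by linarith
  next
    assume "1 \<le> sqrt 2 * \<bar>x*y\<bar> + \<bar>z\<bar>"
    hence "1 \<le> sqrt 2 * \<bar>x*y\<bar>" using z by simp
    hence "1^2 \<le> (sqrt 2 * \<bar>x*y\<bar>)^2" by (intro power_mono) auto
    hence "1 \<le> 2*(x*y)^2" by (simp add: power_mult_distrib)
    moreover have "(x^2+y^2)^2 - 4*(x*y)^2 = (x^2-y^2)^2" by (simp add: power2_eq_square algebra_simps)
    moreover have "(x^2+y^2)^2 = 1" using n by simp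
    moreover have "(x^2-y^2)^2 \<ge> 0" by simp
    ultimately show False by linarith
  qed
qed

lemma N0_not_Ins:
  assumes "p \<in> N0" shows "\<not> Ins (p$1) (p$2) (p$3)"
proof
  assume I: "Ins (p$1) (p$2) (p$3)"
  have ps: "p \<in> sphere 0 1" and nA: "p \<notin> Aregion" and nA0: "p \<notin> uminus ` Aregion"
    using assms unfolding N0_def by auto
  have nA': "-p \<notin> Aregion"
  proof
    assume "-p \<in> Aregion"
    hence "-(-p) \<in> uminus ` Aregion" by (rule imageI)
    thus False using nA0 by simp
  qed
  have n: "(p$1)^2 + (p$2)^2 + (p$3)^2 = 1" using ps sphere3 by blast
  have "p$3 \<noteq> 0" by (rule Ins_z[OF n I])
  then show False
  proof (cases "p$3 > 0")
    case True then show False using Ins_in_A[OF ps True I] nA by simp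
  next
    case False
    hence z: "(-p)$3 > 0" using \<open>p$3 \<noteq> 0\<close> by simp
    have "-p \<in> sphere 0 1" using ps by simp
    moreover have "Ins ((-p)$1) ((-p)$2) ((-p)$3)" using I Ins_neg by simp
    ultimately show False using Ins_in_A[OF _ z] nA' by blast
  qed
qed

theorem proposition3p5:
  shows "\<not> (\<exists>u v w. u \<in> N0 \<and> v \<in> N0 \<and> w \<in> N0 \<and>
              inner u v = 0 \<and> inner v w = 0 \<and> inner u w = 0)"
proof
  assume "\<exists>u v w. u \<in> N0 \<and> v \<in> N0 \<and> w \<in> N0 \<and> inner u v = 0 \<and> inner v w = 0 \<and> inner u w = 0"
  then obtain u v w where h: "u \<in> N0" "v \<in> N0" "w \<in> N0" "inner u v = 0" "inner v w = 0" "inner u w = 0"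
    by blast
  have s: "u \<in> sphere 0 1" "v \<in> sphere 0 1" "w \<in> sphere 0 1" using h(1-3) unfolding N0_def by auto
  have "ON u v w" unfolding ON_def using s h(4-6) by (simp add: norm_eq_1)
  from core[OF this N0_not_Ins[OF h(1)] N0_not_Ins[OF h(2)] N0_not_Ins[OF h(3)]] show False .
qed

end
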